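(* Let $X$ be a CAT(0) Euclidean polygonal complex, let $x_1,x_2,x_3,x_4\in X$, and for $1\le i\le 4$ let $W_i$ be the full triangle spanned by the three points $\{x_1,x_2,x_3,x_4\}\setminus\{x_i\}$. If $p\in W_i$ for some $i$, then there exists $j\neq i$ with $p\in W_j$.
   Context: A CAT(0) Euclidean polygonal complex is a 2-dimensional polygonal complex whose cells are convex Euclidean polygons, with its induced length metric, assumed CAT(0). $\overline{ab}$ denotes the unique geodesic between $a,b$; $\triangle(x,y,z)=\overline{xy}\cup\overline{yz}\cup\overline{zx}$. The full triangle $\blacktriangle(x,y,z)$ is the union of $\triangle(x,y,z)$ with the set of points $p\in X\setminus\triangle(x,y,z)$ for which $\triangle(x,y,z)$ is not null-homotopic in $X\setminus\{p\}$. *)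

theory Defs
  imports "HOL-Analysis.Analysis"
begin

text \<open>A cell of a Euclidean polygonal complex: a compact convex polytope P in the
  Euclidean plane together with its characteristic map f into X.\<close>
type_synonym 'a cell = "(real^2) set \<times> (real^2 \<Rightarrow> 'a)"

text \<open>Euclidean polygonal complex structure on the whole space (type) 'a, following
  Bridson--Haefliger I.7.37 with kappa = 0 and dimension 2.\<close>
definition euclidean_polygonal_structure :: "'a cell set \<Rightarrow> bool" where
  "euclidean_polygonal_structure C \<longleftrightarrow>
     (\<forall>(P,f)\<in>C. (\<exists>V. finite V \<and> V \<noteq> {} \<and> P = convex hull V) \<and> inj_on f P) \<and>
     (\<Union>(P,f)\<in>C. f ` P) = UNIV \<and>
     (\<exists>(P,f)\<in>C. interior P \<noteq> {}) \<and>
     (\<forall>(P,f)\<in>C. \<forall>(P',f')\<in>C. \<forall>u\<in>P. \<forall>u'\<in>P'. f u = f' u' \<longrightarrow>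
        (\<exists>F F' h. F face_of P \<and> u \<in> rel_interior F \<and> F' face_of P' \<and> u' \<in> rel_interior F' \<and>
           h ` F = F' \<and> (\<forall>y\<in>F. \<forall>z\<in>F. dist (h y) (h z) = dist y z) \<and>
           (\<forall>y\<in>F. f y = f' (h y))))"

definition string_lengths :: "'a cell set \<Rightarrow> 'a \<Rightarrow> 'a \<Rightarrow> real set" where
  "string_lengths C x y =
     {(\<Sum>i<n. dist (u i) (v i)) | n pts u v cell.
        pts 0 = x \<and> pts n = y \<and>
        (\<forall>i<n. cell i \<in> C \<and> u i \<in> fst (cell i) \<and> v i \<in> fst (cell i) \<and>
               snd (cell i) (u i) = pts i \<and> snd (cell i) (v i) = pts (Suc i))}"

definition induced_length_metric :: "'a::metric_space cell set \<Rightarrow> bool" where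
  "induced_length_metric C \<longleftrightarrow> (\<forall>x y. dist x y = Inf (string_lengths C x y))"

definition euclidean_polygonal_complex :: "'a::metric_space cell set \<Rightarrow> bool" where
  "euclidean_polygonal_complex C \<longleftrightarrow>
     euclidean_polygonal_structure C \<and> induced_length_metric C"

definition geod_path :: "'a::metric_space \<Rightarrow> 'a \<Rightarrow> (real \<Rightarrow> 'a) \<Rightarrow> bool" where
  "geod_path a b g \<longleftrightarrow> g 0 = a \<and> g 1 = b \<and>
     (\<forall>s\<in>{0..1}. \<forall>t\<in>{0..1}. dist (g s) (g t) = \<bar>s - t\<bar> * dist a b)"

definition CAT0 :: "'a::metric_space itself \<Rightarrow> bool" where
  "CAT0 _ \<longleftrightarrow>
     (\<forall>a b::'a. \<exists>g. geod_path a b g) \<and>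
     (\<forall>(a::'a) b c g1 g2 g3. geod_path a b g1 \<and> geod_path b c g2 \<and> geod_path c a g3 \<longrightarrow>
        (\<exists>a' b' c' :: real^2. dist a' b' = dist a b \<and> dist b' c' = dist b c \<and> dist c' a' = dist c a \<and>
           (\<forall>(g,p,q)\<in>{(g1,a',b'),(g2,b',c'),(g3,c',a')}. \<forall>(h,p',q')\<in>{(g1,a',b'),(g2,b',c'),(g3,c',a')}.
              \<forall>s\<in>{0..1}. \<forall>t\<in>{0..1}.
                dist (g s) (h t) \<le> dist (p + s *\<^sub>R (q - p)) (p' + t *\<^sub>R (q' - p')))))"

definition seg :: "'a::metric_space \<Rightarrow> 'a \<Rightarrow> 'a set" where
  "seg a b = {z. \<exists>g. geod_path a b g \<and> z \<in> g ` {0..1}}"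

definition triangle :: "'a::metric_space \<Rightarrow> 'a \<Rightarrow> 'a \<Rightarrow> 'a set" where
  "triangle x y z = seg x y \<union> seg y z \<union> seg z x"

definition full_triangle :: "'a::metric_space \<Rightarrow> 'a \<Rightarrow> 'a \<Rightarrow> 'a set" where
  "full_triangle x y z = triangle x y z \<union>
     {p. p \<notin> triangle x y z \<and>
         (\<forall>g1 g2 g3. geod_path x y g1 \<and> geod_path y z g2 \<and> geod_path z x g3 \<longrightarrow>
            \<not> homotopic_loops (- {p}) (g1 +++ g2 +++ g3) (\<lambda>_. x))}"

definition Wfull :: "'a::metric_space \<Rightarrow> 'a \<Rightarrow> 'a \<Rightarrow> 'a \<Rightarrow> nat \<Rightarrow> 'a set" where
  "Wfull x1 x2 x3 x4 i =
     (if i = 1 then full_triangle x2 x3 x4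
      else if i = 2 then full_triangle x1 x3 x4
      else if i = 3 then full_triangle x1 x2 x4
      else full_triangle x1 x2 x3)"

end

theory Submission
  imports Defs
begin




lemma pathstart_const[simp]: "pathstart (\<lambda>_. c) = c"
  by (simp add: pathstart_def)
lemma pathfinish_const[simp]: "pathfinish (\<lambda>_. c) = c"
  by (simp add: pathfinish_def)

lemma hp_rid:
  assumes "path p" "path_image p \<subseteq> S"
  shows "homotopic_paths S (p +++ (\<lambda>_. pathfinish p)) p"
proof -
  have \<section>: "continuous_on {0..1} (\<lambda>t::real. if t \<le> 1/2 then 2 *\<^sub>R t else 1)"
    unfolding split_01
    by (rule continuous_on_cases continuous_intros | force simp: pathfinish_def joinpaths_def)+
  show ?thesis
    apply (rule homotopic_paths_sym)
    using assms unfolding pathfinish_def joinpaths_def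
    by (intro \<section> continuous_on_cases continuous_intros homotopic_paths_reparametrize [where f = "\<lambda>t. if t \<le> 1/2 then 2 *\<^sub>R t else 1"]; force)
qed

lemma hp_lid:
  assumes "path p" "path_image p \<subseteq> S"
  shows "homotopic_paths S ((\<lambda>_. pathstart p) +++ p) p"
proof -
  have "homotopic_paths S (reversepath p +++ (\<lambda>_. pathfinish (reversepath p))) (reversepath p)"
    using assms by (intro hp_rid) auto
  moreover have "reversepath p +++ (\<lambda>_. pathfinish (reversepath p)) = reversepath ((\<lambda>_. pathstart p) +++ p)"
    by (subst reversepath_joinpaths) (auto simp: reversepath_def pathstart_def pathfinish_def)
  ultimately show ?thesis using homotopic_paths_reversepath by metis
qed

lemma hp_rinv:
  assumes "path p" "path_image p \<subseteq> S"
    shows "homotopic_paths S (p +++ reversepath p) (\<lambda>_. pathstart p)"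
proof -
  have p: "continuous_on {0..1} p" 
    using assms by (auto simp: path_def)
  let ?A = "{0..1} \<times> {0..1}"
  have "continuous_on ?A (\<lambda>x. ((\<lambda>u. p (fst x * u)) +++ reversepath (\<lambda>u. p (fst x * u))) (snd x))"
    unfolding joinpaths_def reversepath_def path_def
  proof (rule continuous_on_cases_le)
    show "continuous_on {x \<in> ?A. snd x \<le> 1/2} (\<lambda>t. p (fst t * (2 * snd t)))"
         "continuous_on {x \<in> ?A. 1/2 \<le> snd x} (\<lambda>t. p (fst t * (1 - (2 * snd t - 1))))"
         "continuous_on ?A snd"
      by (intro continuous_on_compose2 [OF p] continuous_intros; auto simp: mult_le_one)+
  qed (auto simp: algebra_simps)
  then show ?thesis
    using assms
    apply (subst homotopic_paths_sym_eq)
    unfolding homotopic_paths_def homotopic_with_def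
    apply (rule_tac x="(\<lambda>y. ((\<lambda>u. p (fst y * u)) +++ reversepath (\<lambda>u. p (fst y * u))) (snd y))" in exI)
    apply (force simp: mult_le_one path_defs joinpaths_def reversepath_def)
    done
qed

lemma hp_linv:
  assumes "path p" "path_image p \<subseteq> S"
    shows "homotopic_paths S (reversepath p +++ p) (\<lambda>_. pathfinish p)"
  using hp_rinv [of "reversepath p" S] assms by simp

lemma hl_null:
  assumes "homotopic_loops S p (\<lambda>_. a)"
    shows "homotopic_paths S p (\<lambda>_. pathstart p)"
proof -
  have "path p" by (metis assms homotopic_loops_imp_path)
  have ploop: "pathfinish p = pathstart p" by (metis assms homotopic_loops_imp_loop)
  have pip: "path_image p \<subseteq> S" by (metis assms homotopic_loops_imp_subset)
  let ?A = "{0..1::real} \<times> {0..1::real}"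
  obtain h where conth: "continuous_on ?A h"
             and hs: "h \<in> ?A \<rightarrow> S"
             and h0[simp]: "\<And>x. x \<in> {0..1} \<Longrightarrow> h(0,x) = p x"
             and h1[simp]: "\<And>x. x \<in> {0..1} \<Longrightarrow> h(1,x) = a"
             and ends: "\<And>t. t \<in> {0..1} \<Longrightarrow> pathfinish (h \<circ> Pair t) = pathstart (h \<circ> Pair t)"
    using assms by (auto simp: homotopic_loops homotopic_with image_subset_iff_funcset)
  have conth0: "path (\<lambda>u. h (u, 0))"
    unfolding path_def
  proof (rule continuous_on_compose [of _ _ h, unfolded o_def])
    show "continuous_on ((\<lambda>x. (x, 0)) ` {0..1}) h"
      by (force intro: continuous_on_subset [OF conth])
  qed (force intro: continuous_intros)
  have pih0: "path_image (\<lambda>u. h (u, 0)) \<subseteq> S"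
    using hs by (force simp: path_image_def)
  have c1: "continuous_on ?A (\<lambda>x. h (fst x * snd x, 0))"
  proof (rule continuous_on_compose [of _ _ h, unfolded o_def])
    show "continuous_on ((\<lambda>x. (fst x * snd x, 0)) ` ?A) h"
      by (force simp: mult_le_one intro: continuous_on_subset [OF conth])
  qed (force intro: continuous_intros)+
  have c2: "continuous_on ?A (\<lambda>x. h (fst x - fst x * snd x, 0))"
  proof (rule continuous_on_compose [of _ _ h, unfolded o_def])
    show "continuous_on ((\<lambda>x. (fst x - fst x * snd x, 0)) ` ?A) h"
      by (auto simp: algebra_simps add_increasing2 mult_left_le intro: continuous_on_subset [OF conth])
  qed (force intro: continuous_intros)
  have [simp]: "\<And>t. \<lbrakk>0 \<le> t \<and> t \<le> 1\<rbrakk> \<Longrightarrow> h (t, 1) = h (t, 0)"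
    using ends by (simp add: pathfinish_def pathstart_def)
  have adhoc_le: "c * 4 \<le> 1 + c * (d * 4)" if "\<not> d * 4 \<le> 3" "0 \<le> c" "c \<le> 1" for c d::real
  proof -
    have "c * 3 \<le> c * (d * 4)" using that less_eq_real_def by auto
    with \<open>c \<le> 1\<close> show ?thesis by fastforce
  qed
  have *: "\<And>p x. \<lbrakk>path p \<and> path(reversepath p);
                  path_image p \<subseteq> S \<and> path_image(reversepath p) \<subseteq> S;
                  pathfinish p = pathstart((\<lambda>_. a) +++ reversepath p) \<and>
                   pathstart(reversepath p) = a \<and> pathstart p = x\<rbrakk>
                  \<Longrightarrow> homotopic_paths S (p +++ (\<lambda>_. a) +++ reversepath p) (\<lambda>_. x)"
  proof -
    fix q x assume H: "path q \<and> path(reversepath q)"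
                  "path_image q \<subseteq> S \<and> path_image(reversepath q) \<subseteq> S"
                  "pathfinish q = pathstart((\<lambda>_. a) +++ reversepath q) \<and>
                   pathstart(reversepath q) = a \<and> pathstart q = x"
    have "homotopic_paths S ((\<lambda>_. a) +++ reversepath q) (reversepath q)"
      using hp_lid[of "reversepath q" S] H by simp
    then have "homotopic_paths S (q +++ (\<lambda>_. a) +++ reversepath q) (q +++ reversepath q)"
      using H by (intro homotopic_paths_join) (auto simp: pathstart_join)
    also have "homotopic_paths S (q +++ reversepath q) (\<lambda>_. x)"
      using hp_rinv[of q S] H by simp
    finally show "homotopic_paths S (q +++ (\<lambda>_. a) +++ reversepath q) (\<lambda>_. x)" .
  qed
  have 1: "homotopic_paths S p (p +++ (\<lambda>_. pathfinish p))"
    using \<open>path p\<close> hp_rid homotopic_paths_sym pip by blast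
  moreover have "homotopic_paths S (p +++ (\<lambda>_. pathfinish p))
                                   ((\<lambda>_. pathstart p) +++ p +++ (\<lambda>_. pathfinish p))"
    using hp_lid [of "p +++ (\<lambda>_. pathfinish p)" S]
    by (metis 1 homotopic_paths_imp_path homotopic_paths_imp_subset homotopic_paths_sym pathstart_join)
  moreover 
  have "homotopic_paths S ((\<lambda>_. pathstart p) +++ p +++ (\<lambda>_. pathfinish p))
                                   ((\<lambda>u. h (u, 0)) +++ (\<lambda>_. a) +++ reversepath (\<lambda>u. h (u, 0)))"
    unfolding homotopic_paths_def homotopic_with_def
  proof (intro exI strip conjI)
    let ?h = "\<lambda>y. ((\<lambda>u. h (fst y * u, 0)) +++ (\<lambda>u. h (Pair (fst y) u)) 
               +++ (\<lambda>u. h (fst y - fst y * u, 0))) (snd y)" 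
    have "continuous_on ?A ?h"
      by (intro continuous_on_homotopic_join_lemma; simp add: path_defs joinpaths_def conth c1 c2)
    moreover have "?h \<in> ?A \<rightarrow> S"
      using hs
      unfolding joinpaths_def
      by (force simp: algebra_simps mult_le_one mult_left_le  intro: adhoc_le)
  ultimately show "continuous_map (prod_topology (top_of_set {0..1}) (top_of_set {0..1}))
                         (top_of_set S) ?h"
    by (simp add: image_subset_iff_funcset)
  qed (use ploop in \<open>simp_all add: reversepath_def path_defs joinpaths_def o_def conth c1 c2\<close>)
  moreover have "homotopic_paths S ((\<lambda>u. h (u, 0)) +++ (\<lambda>_. a) +++ reversepath (\<lambda>u. h (u, 0)))
                                   (\<lambda>_. pathstart p)"
    by (rule *; simp add: pih0 pathstart_def pathfinish_def conth0; simp add: reversepath_def joinpaths_def)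
  ultimately show ?thesis
    by (blast intro: homotopic_paths_trans)
qed


lemma geod_rev: assumes "geod_path a b g" shows "geod_path b a (reversepath g)"
proof -
  have g: "g 0 = a" "g 1 = b" "\<And>s t. s \<in> {0..1} \<Longrightarrow> t \<in> {0..1} \<Longrightarrow> dist (g s) (g t) = \<bar>s - t\<bar> * dist a b"
    using assms unfolding geod_path_def by auto
  have "dist (g (1 - s)) (g (1 - t)) = \<bar>s - t\<bar> * dist b a" if "s \<in> {0..1}" "t \<in> {0..1}" for s t
  proof -
    have "1 - s \<in> {0..1}" "1 - t \<in> {0..1}" using that by auto
    then have "dist (g (1 - s)) (g (1 - t)) = \<bar>(1 - s) - (1 - t)\<bar> * dist a b" using g(3) by blast
    also have "\<bar>(1 - s) - (1 - t)\<bar> = \<bar>s - t\<bar>" by simp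
    finally show ?thesis by (simp add: dist_commute)
  qed
  then show ?thesis unfolding geod_path_def reversepath_def using g by auto
qed

lemma geod_const: "geod_path b b (\<lambda>_. b)"
  unfolding geod_path_def by auto

lemma geod_unique:
  assumes C: "CAT0 TYPE('a::metric_space)" and g: "geod_path a b (g::real \<Rightarrow> 'a)" and h: "geod_path a b h"
    and s: "s \<in> {0..1}"
  shows "g s = h s"
proof -
  note X = C[unfolded CAT0_def, THEN conjunct2, THEN spec[where x=a], THEN spec[where x=b], THEN spec[where x=b], THEN spec[where x=g], THEN spec[where x="\<lambda>_. b"], THEN spec[where x="reversepath h"], THEN mp]
  have pre: "geod_path a b g \<and> geod_path b b (\<lambda>_. b) \<and> geod_path b a (reversepath h)"
    using g geod_const geod_rev[OF h] by blast
  obtain a' b' c' :: "real^2" where d: "dist b' c' = dist b b"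
    and all: "\<forall>(g',p,q)\<in>{(g,a',b'),((\<lambda>_. b),b',c'),(reversepath h,c',a')}. \<forall>(h',p',q')\<in>{(g,a',b'),((\<lambda>_. b),b',c'),(reversepath h,c',a')}.
              \<forall>s\<in>{0..1}. \<forall>t\<in>{0..1}.
                dist (g' s) (h' t) \<le> dist (p + s *\<^sub>R (q - p)) (p' + t *\<^sub>R (q' - p'))"
    using X[OF pre] by blast
  have c': "c' = b'" using d by simp
  have m1: "(g,a',b') \<in> {(g,a',b'),((\<lambda>_. b),b',c'),(reversepath h,c',a')}" by simp
  have m2: "(reversepath h,c',a') \<in> {(g,a',b'),((\<lambda>_. b),b',c'),(reversepath h,c',a')}" by simp
  have Y: "\<forall>s\<in>{0..1}. \<forall>t\<in>{0..1}. dist (g s) (reversepath h t) \<le> dist (a' + s *\<^sub>R (b' - a')) (c' + t *\<^sub>R (a' - c'))"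
    using bspec[OF bspec[OF all m1, unfolded prod.case] m2, unfolded prod.case] .
  have s1: "1 - s \<in> {0..1}" using s by auto
  have "dist (g s) (reversepath h (1 - s)) \<le> dist (a' + s *\<^sub>R (b' - a')) (c' + (1 - s) *\<^sub>R (a' - c'))"
    using Y s s1 by blast
  also have "c' + (1 - s) *\<^sub>R (a' - c') = a' + s *\<^sub>R (b' - a')"
    unfolding c' by (simp add: algebra_simps)
  finally have "dist (g s) (h s) \<le> 0" by (simp add: reversepath_def)
  then show ?thesis by simp
qed

lemma geod_path_path: "geod_path a b g \<Longrightarrow> path g"
  unfolding path_def
  apply (rule lipschitz_on_continuous_on[where L="dist a b"])
  unfolding lipschitz_on_def geod_path_def
  by (auto simp: dist_real_def)

definition geo :: "'a::metric_space \<Rightarrow> 'a \<Rightarrow> real \<Rightarrow> 'a" where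
  "geo a b = (SOME g. geod_path a b g)"

lemma geo_ok: "CAT0 TYPE('a::metric_space) \<Longrightarrow> geod_path a b (geo (a::'a) b)"
  using someI_ex[of "geod_path a b"] unfolding CAT0_def geo_def by blast

lemma geo_start[simp]: "CAT0 TYPE('a::metric_space) \<Longrightarrow> pathstart (geo (a::'a) b) = a"
  using geo_ok by (auto simp: geod_path_def pathstart_def)

lemma geo_finish[simp]: "CAT0 TYPE('a::metric_space) \<Longrightarrow> pathfinish (geo (a::'a) b) = b"
  using geo_ok by (auto simp: geod_path_def pathfinish_def)

lemma geo_path[simp]: "CAT0 TYPE('a::metric_space) \<Longrightarrow> path (geo (a::'a) b)"
  using geo_ok geod_path_path by blast

lemma geo_uniq: "CAT0 TYPE('a::metric_space) \<Longrightarrow> geod_path a b g \<Longrightarrow> t \<in> {0..1} \<Longrightarrow> g t = geo (a::'a) b t"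
  using geo_ok geod_unique by blast

lemma geo_rev: "CAT0 TYPE('a::metric_space) \<Longrightarrow> t \<in> {0..1} \<Longrightarrow> reversepath (geo (a::'a) b) t = geo b a t"
  using geo_uniq geod_rev geo_ok by blast

lemma seg_eq: assumes C: "CAT0 TYPE('a::metric_space)" shows "seg (a::'a) b = path_image (geo a b)"
proof
  show "seg a b \<subseteq> path_image (geo a b)"
  proof
    fix z assume "z \<in> seg a b"
    then obtain g t where g: "geod_path a b g" "t \<in> {0..1}" "z = g t" unfolding seg_def by auto
    then have "z = geo a b t" using geo_uniq[OF C] by blast
    then show "z \<in> path_image (geo a b)" using g(2) unfolding path_image_def by blast
  qed
next
  show "path_image (geo a b) \<subseteq> seg a b"
    unfolding seg_def path_image_def using geo_ok[OF C] by blast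
qed

lemma seg_sym: "seg a b = seg b a"
proof -
  have *: "seg a b \<subseteq> seg b a" for a b :: 'a
  proof
    fix z assume "z \<in> seg a b"
    then obtain g t where g: "geod_path a b g" "t \<in> {0..1}" "z = g t" unfolding seg_def by auto
    then have "z = reversepath g (1 - t)" "1 - t \<in> {0..1}" by (auto simp: reversepath_def)
    then show "z \<in> seg b a" unfolding seg_def using geod_rev[OF g(1)] by blast
  qed
  show ?thesis using *[of a b] *[of b a] by blast
qed

lemma geo_img: "CAT0 TYPE('a::metric_space) \<Longrightarrow> p \<notin> seg a b \<Longrightarrow> path_image (geo (a::'a) b) \<subseteq> -{p}"
  using seg_eq by blast

lemma hp_cong_r: assumes "homotopic_paths S p q" "\<And>t. t \<in> {0..1} \<Longrightarrow> q t = q' t" shows "homotopic_paths S p q'"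
proof -
  have "homotopic_paths S q q'"
    using assms homotopic_paths_imp_path homotopic_paths_imp_subset by (intro homotopic_paths_eq) blast+
  then show ?thesis using assms(1) homotopic_paths_trans by blast
qed

lemma hp_cong_l: "homotopic_paths S p q \<Longrightarrow> (\<And>t. t \<in> {0..1} \<Longrightarrow> p t = p' t) \<Longrightarrow> homotopic_paths S p' q"
  by (meson hp_cong_r homotopic_paths_sym)

lemma hl_cong_l: assumes "homotopic_loops S p q" "\<And>t. t \<in> {0..1} \<Longrightarrow> p t = p' t" shows "homotopic_loops S p' q"
proof -
  have "homotopic_loops S p p'"
    using assms homotopic_loops_imp_path homotopic_loops_imp_subset homotopic_loops_imp_loop
    by (intro homotopic_loops_eq) blast+
  then show ?thesis using assms(1) homotopic_loops_trans homotopic_loops_sym by blast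
qed

lemma join_cong: "(\<And>t. t \<in> {0..1} \<Longrightarrow> p t = p' t) \<Longrightarrow> (\<And>t. t \<in> {0..1} \<Longrightarrow> q t = q' t) \<Longrightarrow>
   t \<in> {0..1} \<Longrightarrow> (p +++ q) t = (p' +++ q') t"
  unfolding joinpaths_def by auto


definition Erel :: "'a::metric_space \<Rightarrow> 'a \<Rightarrow> 'a \<Rightarrow> 'a \<Rightarrow> bool" where
  "Erel p a b c \<longleftrightarrow> homotopic_paths (-{p}) (geo a b +++ geo b c) (geo a c)"

lemma loop_iff:
  assumes C: "CAT0 TYPE('a::metric_space)"
    and n1: "p \<notin> seg a b" and n2: "p \<notin> seg b c" and n3: "p \<notin> seg c (a::'a)"
  shows "homotopic_loops (-{p}) (geo a b +++ geo b c +++ geo c a) (\<lambda>_. a) \<longleftrightarrow> Erel p a b c"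
proof -
  let ?S = "-{p}"
  let ?P = "geo a b" and ?Q = "geo b c" and ?R = "geo c a" and ?R' = "geo a c"
  have [simp]: "path (geo x y)" "pathstart (geo x y) = x" "pathfinish (geo x y) = y" for x y :: 'a
    using C by simp_all
  have n4: "p \<notin> seg a c" using n3 seg_sym by metis
  have i: "path_image ?P \<subseteq> ?S" "path_image ?Q \<subseteq> ?S" "path_image ?R \<subseteq> ?S" "path_image ?R' \<subseteq> ?S"
    using geo_img[OF C] n1 n2 n3 n4 by auto
  have ir: "path_image (reversepath ?R) \<subseteq> ?S" using i by simp
  have iPQ: "path_image (?P +++ ?Q) \<subseteq> ?S" using i by (simp add: path_image_join)
  have iQR: "path_image (?Q +++ ?R) \<subseteq> ?S" using i by (simp add: path_image_join)
  have iPQR: "path_image ((?P +++ ?Q) +++ ?R) \<subseteq> ?S" using i by (simp add: path_image_join)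
  have iPQR2: "path_image (?P +++ ?Q +++ ?R) \<subseteq> ?S" using i by (simp add: path_image_join)
  have ass: "homotopic_paths ?S (?P +++ (?Q +++ ?R)) ((?P +++ ?Q) +++ ?R)"
    by (rule homotopic_paths_assoc) (use i in simp_all)
  show ?thesis
  proof
    assume l: "homotopic_loops ?S (?P +++ ?Q +++ ?R) (\<lambda>_. a)"
    have n: "homotopic_paths ?S (?P +++ ?Q +++ ?R) (\<lambda>_. a)"
      using hl_null[OF l] by simp
    have "homotopic_paths ?S (?P +++ ?Q) ((?P +++ ?Q) +++ (\<lambda>_. c))"
      using hp_rid[of "?P +++ ?Q" ?S] iPQ by (simp add: homotopic_paths_sym_eq)
    also have "homotopic_paths ?S ((?P +++ ?Q) +++ (\<lambda>_. c)) ((?P +++ ?Q) +++ (?R +++ reversepath ?R))"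
      apply (rule homotopic_paths_join)
      using iPQ hp_rinv[of ?R ?S] i by (simp_all add: homotopic_paths_sym_eq)
    also have "homotopic_paths ?S ((?P +++ ?Q) +++ (?R +++ reversepath ?R)) (((?P +++ ?Q) +++ ?R) +++ reversepath ?R)"
      by (rule homotopic_paths_assoc) (use i iPQ ir in simp_all)
    also have "homotopic_paths ?S (((?P +++ ?Q) +++ ?R) +++ reversepath ?R) ((?P +++ (?Q +++ ?R)) +++ reversepath ?R)"
      apply (rule homotopic_paths_join)
      using ass ir by (simp_all add: homotopic_paths_sym_eq)
    also have "homotopic_paths ?S ((?P +++ (?Q +++ ?R)) +++ reversepath ?R) ((\<lambda>_. a) +++ reversepath ?R)"
      apply (rule homotopic_paths_join)
      using n ir by simp_all
    also have "homotopic_paths ?S ((\<lambda>_. a) +++ reversepath ?R) (reversepath ?R)"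
      using hp_lid[of "reversepath ?R" ?S] ir by simp
    finally have "homotopic_paths ?S (?P +++ ?Q) (reversepath ?R)" .
    then show "Erel p a b c" unfolding Erel_def
      by (rule hp_cong_r) (simp add: geo_rev[OF C])
  next
    assume e: "Erel p a b c"
    have "homotopic_paths ?S (?P +++ (?Q +++ ?R)) ((?P +++ ?Q) +++ ?R)" by (rule ass)
    also have "homotopic_paths ?S ((?P +++ ?Q) +++ ?R) (?R' +++ ?R)"
      apply (rule homotopic_paths_join)
      using e i unfolding Erel_def by simp_all
    also have "homotopic_paths ?S (?R' +++ ?R) (\<lambda>_. a)"
    proof -
      have "homotopic_paths ?S (?R' +++ reversepath ?R') (\<lambda>_. a)"
        using hp_rinv[of ?R' ?S] i by simp
      then show ?thesis
        by (rule hp_cong_l) (rule join_cong, simp_all add: geo_rev[OF C])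
    qed
    finally have "homotopic_paths ?S (?P +++ ?Q +++ ?R) (\<lambda>_. a)" .
    then show "homotopic_loops ?S (?P +++ ?Q +++ ?R) (\<lambda>_. a)"
      by (rule homotopic_paths_imp_homotopic_loops) simp_all
  qed
qed


lemma E_rev:
  assumes C: "CAT0 TYPE('a::metric_space)"
    and n1: "p \<notin> seg a b" and n2: "p \<notin> seg b c" and n3: "p \<notin> seg a (c::'a)"
    and e: "Erel p a b c"
  shows "Erel p c b a"
proof -
  let ?S = "-{p}"
  have [simp]: "path (geo x y)" "pathstart (geo x y) = x" "pathfinish (geo x y) = y" for x y :: 'a
    using C by simp_all
  have "homotopic_paths ?S (reversepath (geo a b +++ geo b c)) (reversepath (geo a c))"
    using e unfolding Erel_def by (rule homotopic_paths_reversepath_D)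
  then have "homotopic_paths ?S (reversepath (geo b c) +++ reversepath (geo a b)) (reversepath (geo a c))"
    by (simp add: reversepath_joinpaths)
  then have "homotopic_paths ?S (geo c b +++ geo b a) (reversepath (geo a c))"
    by (rule hp_cong_l) (rule join_cong, simp_all add: geo_rev[OF C])
  then show ?thesis unfolding Erel_def
    by (rule hp_cong_r) (simp add: geo_rev[OF C])
qed

lemma E_swap:
  assumes C: "CAT0 TYPE('a::metric_space)"
    and n1: "p \<notin> seg a b" and n2: "p \<notin> seg b c" and n3: "p \<notin> seg a (c::'a)"
    and e: "Erel p a b c"
  shows "Erel p b a c"
proof -
  let ?S = "-{p}"
  let ?P = "geo a b" and ?Q = "geo b c" and ?R' = "geo a c"
  have [simp]: "path (geo x y)" "pathstart (geo x y) = x" "pathfinish (geo x y) = y" for x y :: 'a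
    using C by simp_all
  have i: "path_image ?P \<subseteq> ?S" "path_image ?Q \<subseteq> ?S" "path_image ?R' \<subseteq> ?S"
    using geo_img[OF C] n1 n2 n3 by auto
  have ir: "path_image (reversepath ?P) \<subseteq> ?S" using i by simp
  have "homotopic_paths ?S (reversepath ?P +++ ?R') (reversepath ?P +++ (?P +++ ?Q))"
    apply (rule homotopic_paths_join)
    using e ir unfolding Erel_def by (simp_all add: homotopic_paths_sym_eq)
  also have "homotopic_paths ?S (reversepath ?P +++ (?P +++ ?Q)) ((reversepath ?P +++ ?P) +++ ?Q)"
    by (rule homotopic_paths_assoc) (use i ir in simp_all)
  also have "homotopic_paths ?S ((reversepath ?P +++ ?P) +++ ?Q) ((\<lambda>_. b) +++ ?Q)"
    apply (rule homotopic_paths_join)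
    using hp_linv[of ?P ?S] i by simp_all
  also have "homotopic_paths ?S ((\<lambda>_. b) +++ ?Q) ?Q"
    using hp_lid[of ?Q ?S] i by simp
  finally have "homotopic_paths ?S (reversepath ?P +++ ?R') ?Q" .
  then show ?thesis unfolding Erel_def
    by (rule hp_cong_l) (rule join_cong, simp_all add: geo_rev[OF C])
qed

lemma E_key:
  assumes C: "CAT0 TYPE('a::metric_space)"
    and n: "p \<notin> seg a b" "p \<notin> seg b c" "p \<notin> seg b d" "p \<notin> seg d c" "p \<notin> seg a d" "p \<notin> seg a (c::'a)"
    and e1: "Erel p a b d" and e2: "Erel p b d c" and e3: "Erel p a d c"
  shows "Erel p a b c"
proof -
  let ?S = "-{p}"
  have [simp]: "path (geo x y)" "pathstart (geo x y) = x" "pathfinish (geo x y) = y" for x y :: 'a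
    using C by simp_all
  have i: "path_image (geo a b) \<subseteq> ?S" "path_image (geo b c) \<subseteq> ?S" "path_image (geo b d) \<subseteq> ?S"
     "path_image (geo d c) \<subseteq> ?S" "path_image (geo a d) \<subseteq> ?S" "path_image (geo a c) \<subseteq> ?S"
    using geo_img[OF C] n by auto
  have "homotopic_paths ?S (geo a b +++ geo b c) (geo a b +++ (geo b d +++ geo d c))"
    apply (rule homotopic_paths_join)
    using e2 i unfolding Erel_def by (simp_all add: homotopic_paths_sym_eq)
  also have "homotopic_paths ?S (geo a b +++ (geo b d +++ geo d c)) ((geo a b +++ geo b d) +++ geo d c)"
    by (rule homotopic_paths_assoc) (use i in simp_all)
  also have "homotopic_paths ?S ((geo a b +++ geo b d) +++ geo d c) (geo a d +++ geo d c)"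
    apply (rule homotopic_paths_join)
    using e1 i unfolding Erel_def by simp_all
  also have "homotopic_paths ?S (geo a d +++ geo d c) (geo a c)"
    using e3 unfolding Erel_def .
  finally show ?thesis unfolding Erel_def .
qed


lemma E_perm:
  assumes C: "CAT0 TYPE('a::metric_space)"
    and ok: "\<forall>x\<in>{a,b,c}. \<forall>y\<in>{a,b,c}. p \<notin> seg x (y::'a)"
    and e: "Erel p a b c"
  shows "Erel p b a c" "Erel p c b a" "Erel p a c b" "Erel p b c a" "Erel p c a b"
proof -
  have n: "p \<notin> seg x y" if "x \<in> {a,b,c}" "y \<in> {a,b,c}" for x y using ok that by blast
  show bac: "Erel p b a c" by (rule E_swap[OF C _ _ _ e]) (rule n; simp)+
  show "Erel p c b a" by (rule E_rev[OF C _ _ _ e]) (rule n; simp)+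
  show cab: "Erel p c a b" by (rule E_rev[OF C _ _ _ bac]) (rule n; simp)+
  show acb: "Erel p a c b" by (rule E_swap[OF C _ _ _ cab]) (rule n; simp)+
  show "Erel p b c a" by (rule E_rev[OF C _ _ _ acb]) (rule n; simp)+
qed

lemma main4:
  assumes C: "CAT0 TYPE('a::metric_space)"
    and ok: "\<forall>x\<in>{a,b,c,d}. \<forall>y\<in>{a,b,c,d}. p \<notin> seg x (y::'a)"
    and ne: "\<not> Erel p a b c"
  shows "\<not> Erel p a b d \<or> \<not> Erel p b c d \<or> \<not> Erel p a c d"
proof (rule ccontr)
  assume "\<not> ?thesis"
  then have e1: "Erel p a b d" and e2: "Erel p b c d" and e3: "Erel p a c d" by auto
  have n: "p \<notin> seg x y" if "x \<in> {a,b,c,d}" "y \<in> {a,b,c,d}" for x y using ok that by blast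
  have e2': "Erel p b d c" by (rule E_perm(3)[OF C _ e2]) (use n in auto)
  have e3': "Erel p a d c" by (rule E_perm(3)[OF C _ e3]) (use n in auto)
  have "Erel p a b c" by (rule E_key[OF C _ _ _ _ _ _ e1 e2' e3']) (rule n; simp)+
  with ne show False by simp
qed

lemma ft_iff:
  assumes C: "CAT0 TYPE('a::metric_space)"
    and n1: "p \<notin> seg a b" and n2: "p \<notin> seg b c" and n3: "p \<notin> seg c (a::'a)"
  shows "p \<in> full_triangle a b c \<longleftrightarrow> \<not> Erel p a b c"
proof -
  have nt: "p \<notin> triangle a b c" using n1 n2 n3 unfolding triangle_def by simp
  have ft: "p \<in> full_triangle a b c \<longleftrightarrow> (\<forall>g1 g2 g3. geod_path a b g1 \<and> geod_path b c g2 \<and> geod_path c a g3 \<longrightarrow>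
            \<not> homotopic_loops (- {p}) (g1 +++ g2 +++ g3) (\<lambda>_. a))"
    using nt unfolding full_triangle_def by simp
  show ?thesis
  proof
    assume "p \<in> full_triangle a b c"
    then have all: "\<forall>g1 g2 g3. geod_path a b g1 \<and> geod_path b c g2 \<and> geod_path c a g3 \<longrightarrow>
            \<not> homotopic_loops (- {p}) (g1 +++ g2 +++ g3) (\<lambda>_. a)" using ft by simp
    have "\<not> homotopic_loops (- {p}) (geo a b +++ geo b c +++ geo c a) (\<lambda>_. a)"
      using all[rule_format, of "geo a b" "geo b c" "geo c a"] geo_ok[OF C] by simp
    then show "\<not> Erel p a b c" using loop_iff[OF C n1 n2 n3] by simp
  next
    assume ne: "\<not> Erel p a b c"
    have *: "\<not> homotopic_loops (- {p}) (g1 +++ g2 +++ g3) (\<lambda>_. a)"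
      if g: "geod_path a b g1" "geod_path b c g2" "geod_path c a g3" for g1 g2 g3
    proof
      assume "homotopic_loops (- {p}) (g1 +++ g2 +++ g3) (\<lambda>_. a)"
      then have "homotopic_loops (- {p}) (geo a b +++ geo b c +++ geo c a) (\<lambda>_. a)"
        by (rule hl_cong_l) (intro join_cong; simp add: geo_uniq[OF C] g)
      then show False using loop_iff[OF C n1 n2 n3] ne by simp
    qed
    have "\<forall>g1 g2 g3. geod_path a b g1 \<and> geod_path b c g2 \<and> geod_path c a g3 \<longrightarrow>
            \<not> homotopic_loops (- {p}) (g1 +++ g2 +++ g3) (\<lambda>_. a)"
      using * by blast
    then show "p \<in> full_triangle a b c" using ft by simp
  qed
qed

lemma start_in_seg: assumes C: "CAT0 TYPE('a::metric_space)" shows "(a::'a) \<in> seg a b"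
proof -
  have g: "geod_path a b (geo a b)" by (rule geo_ok[OF C])
  have "geo a b 0 = a" using g unfolding geod_path_def by simp
  then have "a \<in> geo a b ` {0..1}" by (metis atLeastAtMost_iff image_eqI order_refl zero_le_one)
  then show ?thesis unfolding seg_def using g by blast
qed

lemma seg_same: assumes "p \<in> seg x x" shows "p = x"
proof -
  obtain g where g1: "geod_path x x g" and pim: "p \<in> g ` {0..1}" using assms unfolding seg_def by blast
  obtain t where t: "t \<in> {0..1}" "p = g t" using pim by blast
  have gd: "g 0 = x \<and> g 1 = x \<and> (\<forall>s\<in>{0..1}. \<forall>t\<in>{0..1}. dist (g s) (g t) = \<bar>s - t\<bar> * dist x x)"
    using g1 unfolding geod_path_def .
  have "dist (g t) (g 0) = \<bar>t - 0\<bar> * dist x x"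
    using gd t(1) by (meson atLeastAtMost_iff order_refl zero_le_one)
  then have "g t = g 0" by simp
  then show ?thesis using t gd by metis
qed

lemma seg_in_ft:
  assumes C: "CAT0 TYPE('a::metric_space)" and p: "p \<in> seg x y" and xy: "x \<in> {a,b,c}" "y \<in> {a,b,(c::'a)}"
  shows "p \<in> full_triangle a b c"
proof -
  have "p \<in> triangle a b c"
  proof (cases "x = y")
    case True
    then have "p = x" using p seg_same by simp
    then show ?thesis using xy start_in_seg[OF C, of a b] start_in_seg[OF C, of b c] start_in_seg[OF C, of c a]
      unfolding triangle_def by auto
  next
    case False
    from xy have "x = a \<or> x = b \<or> x = c" "y = a \<or> y = b \<or> y = c" by auto
    then show ?thesis using False p seg_sym[of a b] seg_sym[of b c] seg_sym[of c a] unfolding triangle_def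
      by (elim disjE) auto
  qed
  then show ?thesis unfolding full_triangle_def by blast
qed


theorem claim6p1:
  fixes C :: "'a::metric_space cell set" and x1 x2 x3 x4 p :: 'a and i :: nat
  assumes "euclidean_polygonal_complex C"
    and "CAT0 TYPE('a)"
    and "i \<in> {1..4}"
    and "p \<in> Wfull x1 x2 x3 x4 i"
  shows "\<exists>j\<in>{1..4}. j \<noteq> i \<and> p \<in> Wfull x1 x2 x3 x4 j"
proof -
  note CC = assms(2)
  let ?W = "Wfull x1 x2 x3 x4"
  have W: "?W 1 = full_triangle x2 x3 x4" "?W 2 = full_triangle x1 x3 x4"
    "?W 3 = full_triangle x1 x2 x4" "?W 4 = full_triangle x1 x2 x3"
    unfolding Wfull_def by simp_all
  have i4: "i = 1 \<or> i = 2 \<or> i = 3 \<or> i = 4" using assms(3) by auto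
  have ex: "(\<exists>j\<in>{1..4}. j \<noteq> i \<and> p \<in> ?W j) \<longleftrightarrow>
     (i \<noteq> 1 \<and> p \<in> ?W 1) \<or> (i \<noteq> 2 \<and> p \<in> ?W 2) \<or> (i \<noteq> 3 \<and> p \<in> ?W 3) \<or> (i \<noteq> 4 \<and> p \<in> ?W 4)"
  proof -
    have "{1..4::nat} = {1,2,3,4}" by auto
    then show ?thesis by auto
  qed
  have pin: "p \<in> ?W i" by (rule assms(4))
  let ?D = "(i \<noteq> 1 \<and> p \<in> ?W 1) \<or> (i \<noteq> 2 \<and> p \<in> ?W 2) \<or> (i \<noteq> 3 \<and> p \<in> ?W 3) \<or> (i \<noteq> 4 \<and> p \<in> ?W 4)"
  have "?D"
  proof (cases "\<exists>x\<in>{x1,x2,x3,x4}. \<exists>y\<in>{x1,x2,x3,x4}. p \<in> seg x y")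
    case True
    then obtain x y where xy: "x \<in> {x1,x2,x3,x4}" "y \<in> {x1,x2,x3,x4}" "p \<in> seg x y" by blast
    have w1: "x \<in> {x2,x3,x4} \<Longrightarrow> y \<in> {x2,x3,x4} \<Longrightarrow> p \<in> ?W 1"
      unfolding W using seg_in_ft[OF CC xy(3)] by blast
    have w2: "x \<in> {x1,x3,x4} \<Longrightarrow> y \<in> {x1,x3,x4} \<Longrightarrow> p \<in> ?W 2"
      unfolding W using seg_in_ft[OF CC xy(3)] by blast
    have w3: "x \<in> {x1,x2,x4} \<Longrightarrow> y \<in> {x1,x2,x4} \<Longrightarrow> p \<in> ?W 3"
      unfolding W using seg_in_ft[OF CC xy(3)] by blast
    have w4: "x \<in> {x1,x2,x3} \<Longrightarrow> y \<in> {x1,x2,x3} \<Longrightarrow> p \<in> ?W 4"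
      unfolding W using seg_in_ft[OF CC xy(3)] by blast
    have "x = x1 \<or> x = x2 \<or> x = x3 \<or> x = x4" "y = x1 \<or> y = x2 \<or> y = x3 \<or> y = x4" using xy by auto
    then show ?D using i4 w1 w2 w3 w4 by (elim disjE) auto
  next
    case False
    then have ns: "\<And>x y. x \<in> {x1,x2,x3,x4} \<Longrightarrow> y \<in> {x1,x2,x3,x4} \<Longrightarrow> p \<notin> seg x y" by blast
    have F: "p \<in> full_triangle a b c \<longleftrightarrow> \<not> Erel p a b c"
      if "a \<in> {x1,x2,x3,x4}" "b \<in> {x1,x2,x3,x4}" "c \<in> {x1,x2,x3,x4}" for a b c
      using that by (intro ft_iff[OF CC] ns) 
    have ok3: "\<forall>x\<in>{a,b,c}. \<forall>y\<in>{a,b,c}. p \<notin> seg x y"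
      if "a \<in> {x1,x2,x3,x4}" "b \<in> {x1,x2,x3,x4}" "c \<in> {x1,x2,x3,x4}" for a b c
      using that ns by blast
    have ok4: "\<forall>x\<in>{a,b,c,d}. \<forall>y\<in>{a,b,c,d}. p \<notin> seg x y"
      if "a \<in> {x1,x2,x3,x4}" "b \<in> {x1,x2,x3,x4}" "c \<in> {x1,x2,x3,x4}" "d \<in> {x1,x2,x3,x4}" for a b c d
      using that ns by blast
    have f1: "p \<in> ?W 1 \<longleftrightarrow> \<not> Erel p x2 x3 x4" unfolding W by (rule F) auto
    have f2: "p \<in> ?W 2 \<longleftrightarrow> \<not> Erel p x1 x3 x4" unfolding W by (rule F) auto
    have f3: "p \<in> ?W 3 \<longleftrightarrow> \<not> Erel p x1 x2 x4" unfolding W by (rule F) auto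
    have f4: "p \<in> ?W 4 \<longleftrightarrow> \<not> Erel p x1 x2 x3" unfolding W by (rule F) auto
    have P123: "\<forall>x\<in>{x1,x2,x3}. \<forall>y\<in>{x1,x2,x3}. p \<notin> seg x y" by (rule ok3) auto
    have P124: "\<forall>x\<in>{x1,x2,x4}. \<forall>y\<in>{x1,x2,x4}. p \<notin> seg x y" by (rule ok3) auto
    have P134: "\<forall>x\<in>{x1,x3,x4}. \<forall>y\<in>{x1,x3,x4}. p \<notin> seg x y" by (rule ok3) auto
    have P234: "\<forall>x\<in>{x2,x3,x4}. \<forall>y\<in>{x2,x3,x4}. p \<notin> seg x y" by (rule ok3) auto
    note E123 = E_perm[OF CC P123] and E124 = E_perm[OF CC P124]
      and E134 = E_perm[OF CC P134] and E234 = E_perm[OF CC P234]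
    from i4 show ?D
    proof (elim disjE)
      assume i: "i = 1"
      have "\<not> Erel p x2 x3 x4" using pin f1 i by simp
      then have "\<not> Erel p x2 x3 x1 \<or> \<not> Erel p x3 x4 x1 \<or> \<not> Erel p x2 x4 x1"
        by (intro main4[OF CC] ok4) auto
      then show ?D using i f2 f3 f4 E123(4) E134(4) E124(4) by auto
    next
      assume i: "i = 2"
      have "\<not> Erel p x1 x3 x4" using pin f2 i by simp
      then have "\<not> Erel p x1 x3 x2 \<or> \<not> Erel p x3 x4 x2 \<or> \<not> Erel p x1 x4 x2"
        by (intro main4[OF CC] ok4) auto
      then show ?D using i f1 f3 f4 E123(3) E234(4) E124(3) by auto
    next
      assume i: "i = 3"
      have "\<not> Erel p x1 x2 x4" using pin f3 i by simp
      then have "\<not> Erel p x1 x2 x3 \<or> \<not> Erel p x2 x4 x3 \<or> \<not> Erel p x1 x4 x3"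
        by (intro main4[OF CC] ok4) auto
      then show ?D using i f1 f2 f4 E234(3) E134(3) by auto
    next
      assume i: "i = 4"
      have "\<not> Erel p x1 x2 x3" using pin f4 i by simp
      then have "\<not> Erel p x1 x2 x4 \<or> \<not> Erel p x2 x3 x4 \<or> \<not> Erel p x1 x3 x4"
        by (intro main4[OF CC] ok4) auto
      then show ?D using i f1 f2 f3 by auto
    qed
  qed
  then show ?thesis using ex by blast
qed

end
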